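(* Let $b:(0,\infty)\to(0,\infty)$ be a slowly varying function. Then there is a function $c:(0,\infty)\to(0,\infty)$ which satisfies $c\approx b$ on $(0,\infty)$, is also slowly varying, and has continuous classical derivatives of all orders (i.e. $c\in\mathcal{C}^\infty((0,\infty))$).
   Context: A measurable function $b:(0,\infty)\to(0,\infty)$ is called slowly varying (s.v.) if for every $\varepsilon>0$ there exist a non-decreasing function $b_\varepsilon$ and a non-increasing function $b_{-\varepsilon}$ on $(0,\infty)$ such that $t^{\varepsilon}b(t)\approx b_\varepsilon(t)$ and $t^{-\varepsilon}b(t)\approx b_{-\varepsilon}(t)$ on $(0,\infty)$. Here $f\approx g$ on a set $A$ means that there is a constant $C\ge 1$ (independent of the argument) such that $C^{-1}g(t)\le f(t)\le C g(t)$ for all $t\in A$. Measurability is with respect to Lebesgue measure. *)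

theory Defs
  imports "HOL-Analysis.Analysis"
begin

definition equiv_on :: "real set \<Rightarrow> (real \<Rightarrow> real) \<Rightarrow> (real \<Rightarrow> real) \<Rightarrow> bool" where
  "equiv_on A f g \<longleftrightarrow> (\<exists>C\<ge>1. \<forall>t\<in>A. g t / C \<le> f t \<and> f t \<le> C * g t)"

definition slowly_varying :: "(real \<Rightarrow> real) \<Rightarrow> bool" where
  "slowly_varying b \<longleftrightarrow>
     b \<in> borel_measurable (lebesgue_on {0<..}) \<and>
     (\<forall>t>0. b t > 0) \<and>
     (\<forall>\<epsilon>>0. \<exists>bp bm :: real \<Rightarrow> real.
        mono_on {0<..} bp \<and> antimono_on {0<..} bm \<and>
        equiv_on {0<..} (\<lambda>t. t powr \<epsilon> * b t) bp \<and>
        equiv_on {0<..} (\<lambda>t. t powr (-\<epsilon>) * b t) bm)"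

definition smooth_on :: "real set \<Rightarrow> (real \<Rightarrow> real) \<Rightarrow> bool" where
  "smooth_on S c \<longleftrightarrow>
     (\<forall>k. (\<forall>t\<in>S. ((deriv ^^ k) c) differentiable (at t)) \<and> continuous_on S ((deriv ^^ k) c))"

end

theory Submission imports Defs "HOL-Computational_Algebra.Polynomial"
begin

definition hh :: "real poly \<Rightarrow> real \<Rightarrow> real" where
  "hh p x = (if x > 0 then poly p (1/x) * exp (-(1/x)) else 0)"

definition Dp :: "real poly \<Rightarrow> real poly" where
  "Dp p = [:0,0,1:] * (p - pderiv p)"

lemma poly_exp_lim: "((\<lambda>y. poly q y * exp (-y)) \<longlongrightarrow> (0::real)) at_top"
proof -
  have e: "\<And>y. poly q y * exp (-y) = (\<Sum>i\<le>degree q. coeff q i * (y ^ i / exp y))"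
    by (simp add: poly_altdef exp_minus sum_distrib_right divide_inverse mult.assoc)
  have "((\<lambda>y. \<Sum>i\<le>degree q. coeff q i * (y ^ i / exp y)) \<longlongrightarrow> (\<Sum>i\<le>degree q. coeff q i * 0)) at_top"
    by (intro tendsto_sum tendsto_mult tendsto_const tendsto_power_div_exp_0)
  then show ?thesis by (simp add: e)
qed

lemma hh_right_lim: "((\<lambda>y. poly q (1/y) * exp (-(1/y))) \<longlongrightarrow> (0::real)) (at_right 0)"
proof -
  have "((\<lambda>y. poly q (inverse y) * exp (-(inverse y))) \<longlongrightarrow> (0::real)) (at_right 0)"
    using filterlim_compose[OF poly_exp_lim filterlim_inverse_at_top_right] by (simp add: o_def)
  then show ?thesis by (simp add: inverse_eq_divide)
qed

lemma hh_deriv: "(hh p has_real_derivative hh (Dp p) x) (at x)"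
proof (cases "x > 0")
  case True
  have d: "((\<lambda>y. poly p (1/y) * exp (-(1/y))) has_real_derivative
      poly (pderiv p) (1/x) * (-(1/x^2)) * exp (-(1/x)) + poly p (1/x) * (exp (-(1/x)) * (1/x^2))) (at x)"
    using True
    by (auto intro!: derivative_eq_intros DERIV_chain2[OF poly_DERIV] simp: power2_eq_square field_simps)
  have "poly (pderiv p) (1/x) * (-(1/x^2)) * exp (-(1/x)) + poly p (1/x) * (exp (-(1/x)) * (1/x^2))
      = hh (Dp p) x"
    using True by (simp add: hh_def Dp_def field_simps power2_eq_square)
  with d have d2: "((\<lambda>y. poly p (1/y) * exp (-(1/y))) has_real_derivative hh (Dp p) x) (at x)" by simp
  show ?thesis
    by (rule has_field_derivative_transform_within_open[OF d2, of "{0<..}"]) (use True in \<open>auto simp: hh_def\<close>)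
next
  case False
  show ?thesis
  proof (cases "x < 0")
    case True
    have "((\<lambda>y. 0) has_real_derivative 0) (at x)" by simp
    then have "(hh p has_real_derivative 0) (at x)"
      by (rule has_field_derivative_transform_within_open[of _ _ _ "{..<0}"]) (use True in \<open>auto simp: hh_def\<close>)
    then show ?thesis using True by (simp add: hh_def)
  next
    case False
    with \<open>\<not> x > 0\<close> have x: "x = 0" by simp
    have "((\<lambda>y. (hh p y - hh p 0) / (y - 0)) \<longlongrightarrow> 0) (at 0)"
    proof (rule filterlim_split_at)
      show "((\<lambda>y. (hh p y - hh p 0) / (y - 0)) \<longlongrightarrow> 0) (at_left 0)"
      proof (rule tendsto_eventually)
        show "\<forall>\<^sub>F y in at_left 0. (hh p y - hh p 0) / (y - 0) = (0::real)"
          by (auto simp: eventually_at_left_field hh_def intro!: exI[of _ "-1"])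
      qed
      have "((\<lambda>y. poly (pCons 0 p) (1/y) * exp (-(1/y))) \<longlongrightarrow> (0::real)) (at_right 0)"
        by (rule hh_right_lim)
      then show "((\<lambda>y. (hh p y - hh p 0) / (y - 0)) \<longlongrightarrow> 0) (at_right 0)"
        apply (rule Lim_transform_eventually)
        apply (simp add: eventually_at_right_field hh_def)
        by (metis zero_less_one)
    qed
    then have "(hh p has_real_derivative 0) (at 0)"
      by (simp add: DERIV_def)
    then show ?thesis using x by (simp add: hh_def)
  qed
qed

fun Ck :: "nat \<Rightarrow> (real \<Rightarrow> real) \<Rightarrow> bool" where
  "Ck 0 f = (\<forall>x. f differentiable (at x))"
| "Ck (Suc k) f = ((\<forall>x. f differentiable (at x)) \<and> Ck k (deriv f))"

lemma Ck_diff: "Ck k f \<Longrightarrow> f differentiable (at x)"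
  by (cases k) auto

lemma Ck_funpow: "Ck k f \<Longrightarrow> (deriv ^^ k) f differentiable (at x)"
  by (induction k arbitrary: f) (auto simp: funpow_Suc_right simp del: funpow.simps)

lemma Ck_Suc_imp: "Ck (Suc k) f \<Longrightarrow> Ck k f"
  by (induction k arbitrary: f) auto

lemma diff_DERIV: "f differentiable (at x) \<Longrightarrow> (f has_real_derivative deriv f x) (at x)"
proof -
  assume "f differentiable (at x)"
  then obtain D where D: "(f has_real_derivative D) (at x)" by (auto simp: real_differentiable_def)
  then have "deriv f x = D" by (rule DERIV_imp_deriv)
  with D show ?thesis by simp
qed

lemma Ck_const: "Ck k (\<lambda>x. c)"
proof (induction k arbitrary: c)
  case 0 then show ?case by simp
next
  case (Suc k)
  have "deriv (\<lambda>x. c) = (\<lambda>x. 0)" by (rule ext) simp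
  with Suc show ?case by simp
qed

lemma Ck_add: "Ck k f \<Longrightarrow> Ck k g \<Longrightarrow> Ck k (\<lambda>x. f x + g x)"
proof (induction k arbitrary: f g)
  case 0 then show ?case by simp
next
  case (Suc k)
  have "deriv (\<lambda>x. f x + g x) = (\<lambda>x. deriv f x + deriv g x)"
  proof
    fix x
    show "deriv (\<lambda>x. f x + g x) x = deriv f x + deriv g x"
      using Suc.prems by (intro DERIV_imp_deriv derivative_intros diff_DERIV) auto
  qed
  with Suc show ?case by simp
qed

lemma Ck_mult: "Ck k f \<Longrightarrow> Ck k g \<Longrightarrow> Ck k (\<lambda>x. f x * g x)"
proof (induction k arbitrary: f g)
  case 0 then show ?case by simp
next
  case (Suc k)
  have "deriv (\<lambda>x. f x * g x) = (\<lambda>x. deriv f x * g x + f x * deriv g x)"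
  proof
    fix x
    show "deriv (\<lambda>x. f x * g x) x = deriv f x * g x + f x * deriv g x"
      using Suc.prems DERIV_mult[OF diff_DERIV[of f x] diff_DERIV[of g x]]
      by (intro DERIV_imp_deriv) (auto simp: mult.commute)
  qed
  moreover have "Ck k (\<lambda>x. deriv f x * g x + f x * deriv g x)"
    using Suc.prems Ck_Suc_imp[OF Suc.prems(1)] Ck_Suc_imp[OF Suc.prems(2)]
    by (intro Ck_add Suc.IH) auto
  ultimately show ?case using Suc.prems by simp
qed

lemma aff_DERIV: "((\<lambda>x. a * x + d) has_real_derivative a) (at (x::real))"
  by (rule derivative_eq_intros refl | simp)+

lemma Ck_affine: "Ck k f \<Longrightarrow> Ck k (\<lambda>x. f (a * x + d))"
proof (induction k arbitrary: f)
  case 0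
  {
    fix x
    have "((\<lambda>x. f (a * x + d)) has_real_derivative deriv f (a * x + d) * a) (at x)"
      using 0 by (intro DERIV_chain2[OF diff_DERIV aff_DERIV]) auto
    then have "(\<lambda>x. f (a * x + d)) differentiable (at x)" by (auto simp: real_differentiable_def)
  }
  then show ?case by simp
next
  case (Suc k)
  have "deriv (\<lambda>x. f (a * x + d)) = (\<lambda>x. a * deriv f (a * x + d))"
  proof
    fix x
    show "deriv (\<lambda>x. f (a * x + d)) x = a * deriv f (a * x + d)"
      using Suc.prems
      by (intro DERIV_imp_deriv DERIV_chain2[OF diff_DERIV aff_DERIV, THEN DERIV_cong]) auto
  qed
  moreover have "\<forall>x. (\<lambda>x. f (a * x + d)) differentiable (at x)"
  proof
    fix x
    have "((\<lambda>x. f (a * x + d)) has_real_derivative deriv f (a * x + d) * a) (at x)"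
      using Suc.prems by (intro DERIV_chain2[OF diff_DERIV aff_DERIV]) auto
    then show "(\<lambda>x. f (a * x + d)) differentiable (at x)" by (auto simp: real_differentiable_def)
  qed
  moreover have "Ck k (\<lambda>x. a * deriv f (a * x + d))"
    using Suc.prems by (intro Ck_mult Ck_const Suc.IH) auto
  ultimately show ?case by simp
qed

lemma Ck_sum: "finite F \<Longrightarrow> (\<And>i. i \<in> F \<Longrightarrow> Ck k (f i)) \<Longrightarrow> Ck k (\<lambda>x. \<Sum>i\<in>F. f i x)"
proof (induction F rule: finite_induct)
  case empty then show ?case using Ck_const[of k 0] by simp
next
  case (insert a F)
  then show ?case by (simp add: Ck_add)
qed

lemma Ck_hh: "Ck k (hh p)"
proof (induction k arbitrary: p)
  case 0 then show ?case using hh_deriv by (auto simp: real_differentiable_def)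
next
  case (Suc k)
  have "deriv (hh p) = hh (Dp p)" by (rule ext) (rule DERIV_imp_deriv[OF hh_deriv])
  then show ?case using Suc hh_deriv by (auto simp: real_differentiable_def)
qed

lemma hh1: "hh 1 x = (if x > 0 then exp (-(1/x)) else 0)"
  by (simp add: hh_def)

definition psi :: "real \<Rightarrow> real" where
  "psi t = hh 1 (t - 1/2) * hh 1 (2 - t)"

lemma Ck_psi: "Ck k psi"
proof -
  have "Ck k (\<lambda>t. hh 1 (1 * t + (-1/2)) * hh 1 ((-1) * t + 2))"
    by (intro Ck_mult Ck_affine Ck_hh)
  moreover have "(\<lambda>t. hh 1 (1 * t + (-1/2)) * hh 1 ((-1) * t + 2)) = psi"
    by (rule ext) (simp add: psi_def)
  ultimately show ?thesis by simp
qed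

lemma hh1_nonneg: "hh 1 x \<ge> 0" by (simp add: hh1)
lemma hh1_le1: "hh 1 x \<le> 1" by (simp add: hh1)
lemma hh1_mono: "0 < x \<Longrightarrow> x \<le> y \<Longrightarrow> hh 1 x \<le> hh 1 y"
  by (simp add: hh1 frac_le)

lemma psi_nonneg: "psi t \<ge> 0" by (simp add: psi_def hh1_nonneg)
lemma psi_le1: "psi t \<le> 1"
  unfolding psi_def using hh1_nonneg hh1_le1 by (meson mult_le_one)
lemma psi_supp: "psi t \<noteq> 0 \<Longrightarrow> 1/2 < t \<and> t < 2"
  by (auto simp: psi_def hh1 split: if_splits)

lemma psi_lower: "1 \<le> s \<Longrightarrow> s \<le> 2 \<Longrightarrow> exp (-5) \<le> psi s + psi (s/2)"
proof (cases "s \<le> 3/2")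
  case True
  assume s: "1 \<le> s"
  have a: "hh 1 (1/2) \<le> hh 1 (s - 1/2)" using s by (intro hh1_mono) auto
  have b: "hh 1 (1/2) \<le> hh 1 (2 - s)" using True by (intro hh1_mono) auto
  have "hh 1 (1/2) * hh 1 (1/2) \<le> psi s"
    unfolding psi_def using a b by (intro mult_mono) (auto simp: hh1_nonneg)
  moreover have "hh 1 (1/2) * hh 1 (1/2) = exp (-4)"
    by (simp add: hh1 flip: exp_add)
  moreover have "exp (-5) \<le> exp (-4::real)" by simp
  ultimately show ?thesis using psi_nonneg[of "s/2"] by linarith
next
  case False
  assume s: "s \<le> 2"
  have a: "hh 1 (1/4) \<le> hh 1 (s/2 - 1/2)" using False by (intro hh1_mono) auto
  have b: "hh 1 1 \<le> hh 1 (2 - s/2)" using s by (intro hh1_mono) auto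
  have "hh 1 (1/4) * hh 1 1 \<le> psi (s/2)"
    unfolding psi_def using a b by (intro mult_mono) (auto simp: hh1_nonneg)
  moreover have "hh 1 (1/4) * hh 1 1 = exp (-5)"
    by (simp add: hh1 flip: exp_add)
  ultimately show ?thesis using psi_nonneg[of "s"] by simp
qed

definition GG :: "int set \<Rightarrow> (real \<Rightarrow> real) \<Rightarrow> real \<Rightarrow> real" where
  "GG F b t = (\<Sum>n\<in>F. b (2 powr n) * psi (t / 2 powr n))"

definition cc :: "(real \<Rightarrow> real) \<Rightarrow> real \<Rightarrow> real" where
  "cc b t = b (2 powr \<lfloor>log 2 t\<rfloor>) * psi (t / 2 powr \<lfloor>log 2 t\<rfloor>)
          + b (2 powr (\<lfloor>log 2 t\<rfloor> + 1)) * psi (t / 2 powr (\<lfloor>log 2 t\<rfloor> + 1))"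

lemma supp_log:
  fixes n :: int
  assumes t: "t > 0" and p: "psi (t / 2 powr n) \<noteq> 0"
  shows "real_of_int n - 1 < log 2 t \<and> log 2 t < real_of_int n + 1"
proof -
  from psi_supp[OF p] have a: "1/2 < t / 2 powr n" "t / 2 powr n < 2" by auto
  have l: "log 2 (t / 2 powr n) = log 2 t - n"
    using t by (simp add: log_divide)
  have "log 2 (1/2) < log 2 (t / 2 powr n)" using a t by (subst log_less_cancel_iff) auto
  moreover have "log 2 (t / 2 powr n) < log 2 2" using a t by (subst log_less_cancel_iff) auto
  moreover have "log 2 (1/2::real) = -1" by (simp add: log_divide)
  ultimately show ?thesis using l by simp
qed

lemma GG_eq:
  fixes F F' :: "int set"
  assumes "finite F" "finite F'" "\<And>n. psi (t / 2 powr n) \<noteq> 0 \<Longrightarrow> n \<in> F"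
    "\<And>n. psi (t / 2 powr n) \<noteq> 0 \<Longrightarrow> n \<in> F'"
  shows "GG F b t = GG F' b t"
proof -
  have "GG F b t = GG (F \<inter> F') b t"
    unfolding GG_def using assms by (intro sum.mono_neutral_right) auto
  moreover have "GG F' b t = GG (F \<inter> F') b t"
    unfolding GG_def using assms by (intro sum.mono_neutral_right) auto
  ultimately show ?thesis by simp
qed

lemma cc_GG:
  fixes F :: "int set"
  assumes t: "t > 0" and F: "finite F" "\<And>n. psi (t / 2 powr n) \<noteq> 0 \<Longrightarrow> n \<in> F"
  shows "cc b t = GG F b t"
proof -
  define m where "m = \<lfloor>log 2 t\<rfloor>"
  have "cc b t = GG {m, m+1} b t"
    by (simp add: cc_def GG_def m_def)
  also have "\<dots> = GG F b t"
  proof (rule GG_eq)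
    fix n :: int assume "psi (t / 2 powr n) \<noteq> 0"
    from supp_log[OF t this] have "real_of_int n - 1 < log 2 t" "log 2 t < real_of_int n + 1" by auto
    moreover have "m \<le> log 2 t" "log 2 t < m + 1" unfolding m_def by linarith+
    ultimately have "n = m \<or> n = m + 1" by linarith
    then show "n \<in> {m, m+1}" by auto
  qed (use F in auto)
  finally show ?thesis .
qed

lemma Ck_GG: "finite F \<Longrightarrow> Ck k (GG F b)"
proof -
  assume F: "finite F"
  have "Ck k (\<lambda>t. \<Sum>n\<in>F. b (2 powr n) * psi ((1 / 2 powr n) * t + 0))"
    by (intro Ck_sum F Ck_mult Ck_const Ck_affine Ck_psi)
  moreover have "(\<lambda>t. \<Sum>n\<in>F. b (2 powr n) * psi ((1 / 2 powr n) * t + 0)) = GG F b"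
    by (rule ext) (simp add: GG_def)
  ultimately show ?thesis by simp
qed

lemma funpow_deriv_local:
  assumes "open U" "\<And>x. x \<in> U \<Longrightarrow> f x = g x" "x \<in> U"
  shows "(deriv ^^ k) f x = (deriv ^^ k) g x"
  using assms(3)
proof (induction k arbitrary: x)
  case 0 then show ?case using assms by simp
next
  case (Suc k)
  have ev: "eventually (\<lambda>y. y \<in> U) (nhds x)"
    using assms(1) Suc.prems eventually_nhds by blast
  have "deriv ((deriv ^^ k) f) x = deriv ((deriv ^^ k) g) x"
    by (rule deriv_cong_ev[OF eventually_mono[OF ev] refl]) (use Suc.IH in auto)
  then show ?case by simp
qed

lemma cc_diff:
  assumes t: "t \<in> {0<..}"
  shows "(deriv ^^ k) (cc b) differentiable (at t)"
proof -
  define m where "m = \<lfloor>log 2 t\<rfloor>"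
  define F where "F = {m - 1 .. m + 2}"
  define U where "U = {t/2 <..< 2*t}"
  have t0: "t > 0" using t by simp
  have agree: "cc b y = GG F b y" if y: "y \<in> U" for y
  proof (rule cc_GG)
    show "y > 0" using y t0 unfolding U_def by auto
    show "finite F" by (simp add: F_def)
    fix n :: int assume "psi (y / 2 powr n) \<noteq> 0"
    from supp_log[OF \<open>y > 0\<close> this] have n: "real_of_int n - 1 < log 2 y" "log 2 y < real_of_int n + 1" by auto
    have "log 2 (t/2) < log 2 y" using y t0 unfolding U_def by (subst log_less_cancel_iff) auto
    moreover have "log 2 y < log 2 (2*t)" using y t0 unfolding U_def by (subst log_less_cancel_iff) auto
    moreover have "log 2 (t/2) = log 2 t - 1" "log 2 (2*t) = log 2 t + 1"
      using t0 by (simp_all add: log_divide log_mult)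
    moreover have "m \<le> log 2 t" "log 2 t < m + 1" unfolding m_def by linarith+
    ultimately show "n \<in> F" using n unfolding F_def by simp
  qed
  have oU: "open U" "t \<in> U" using t0 by (auto simp: U_def)
  have eq: "(deriv ^^ k) (cc b) y = (deriv ^^ k) (GG F b) y" if "y \<in> U" for y
    by (rule funpow_deriv_local[OF oU(1) agree that])
  have "Ck k (GG F b)" by (rule Ck_GG) (simp add: F_def)
  from Ck_funpow[OF this, of t] obtain D where
    "((deriv ^^ k) (GG F b) has_real_derivative D) (at t)" by (auto simp: real_differentiable_def)
  then have "((deriv ^^ k) (cc b) has_real_derivative D) (at t)"
    by (rule has_field_derivative_transform_within_open[OF _ oU]) (simp add: eq)
  then show ?thesis by (auto simp: real_differentiable_def)
qed

lemma cc_smooth: "smooth_on {0<..} (cc b)"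
  unfolding smooth_on_def
  by (intro allI conjI ballI continuous_at_imp_continuous_on differentiable_imp_continuous_within cc_diff)

lemma sv_K:
  assumes sv: "slowly_varying b"
  shows "\<exists>K\<ge>1. \<forall>t s. 0 < t \<longrightarrow> t \<le> s \<longrightarrow> s \<le> 2*t \<longrightarrow> b s \<le> K * b t \<and> b t \<le> K * b s"
proof -
  have bpos: "\<And>t. t > 0 \<Longrightarrow> b t > 0" using sv by (simp add: slowly_varying_def)
  have "\<exists>bp bm :: real \<Rightarrow> real. mono_on {0<..} bp \<and> antimono_on {0<..} bm \<and>
        equiv_on {0<..} (\<lambda>t. t powr 1 * b t) bp \<and>
        equiv_on {0<..} (\<lambda>t. t powr (-1) * b t) bm"
  proof -
    have H: "\<forall>\<epsilon>>0. \<exists>bp bm :: real \<Rightarrow> real. mono_on {0<..} bp \<and> antimono_on {0<..} bm \<and>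
        equiv_on {0<..} (\<lambda>t. t powr \<epsilon> * b t) bp \<and>
        equiv_on {0<..} (\<lambda>t. t powr (-\<epsilon>) * b t) bm"
      using sv unfolding slowly_varying_def by blast
    show ?thesis using H[rule_format, OF zero_less_one] .
  qed
  then obtain bp bm where mp: "mono_on {0<..} bp" and mm: "antimono_on {0<..} bm"
    and e1: "equiv_on {0<..} (\<lambda>t. t powr 1 * b t) bp"
    and e2: "equiv_on {0<..} (\<lambda>t. t powr (-1) * b t) bm"
    by blast
  obtain C1 where C1: "C1 \<ge> 1" "\<And>t. t > 0 \<Longrightarrow> bp t / C1 \<le> t * b t \<and> t * b t \<le> C1 * bp t"
    using e1 unfolding equiv_on_def by auto
  obtain C2 where C2: "C2 \<ge> 1" "\<And>t. t > 0 \<Longrightarrow> bm t / C2 \<le> b t / t \<and> b t / t \<le> C2 * bm t"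
    using e2 unfolding equiv_on_def by (auto simp: powr_minus divide_inverse mult.commute)
  define A where "A = C1 * C1"
  define B where "B = C2 * C2"
  have A1: "1 \<le> A" unfolding A_def using C1(1) by (metis mult_mono' mult_1 zero_le_one)
  have B1: "1 \<le> B" unfolding B_def using C2(1) by (metis mult_mono' mult_1 zero_le_one)
  have AB: "1 \<le> A * B" using A1 B1 by (metis mult_mono' mult_1 zero_le_one)
  show ?thesis
  proof (intro exI[of _ "2 * A * B"] conjI allI impI)
    show "1 \<le> 2 * A * B" using AB by linarith
    fix t s :: real assume t: "0 < t" and ts: "t \<le> s" and st: "s \<le> 2 * t"
    have s: "s > 0" using t ts by linarith
    have bt: "b t > 0" "b s > 0" using bpos t s by auto
    have "bp t \<le> bp s" using mp t s ts by (auto simp: monotone_on_def)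
    have 1: "t * b t \<le> C1 * bp t" using C1(2)[OF t] by blast
    have 2: "C1 * bp t \<le> C1 * bp s" using \<open>bp t \<le> bp s\<close> C1(1) by (intro mult_left_mono) auto
    have 3: "bp s \<le> C1 * (s * b s)" using C1(2)[OF s] C1(1) by (simp add: divide_le_eq mult.commute)
    have 4: "C1 * bp s \<le> C1 * (C1 * (s * b s))" using 3 C1(1) by (intro mult_left_mono) auto
    have 5: "C1 * (C1 * (s * b s)) \<le> C1 * (C1 * (2 * t * b s))"
      using st bt C1(1) by (intro mult_left_mono) auto
    have "t * b t \<le> t * (2 * A * b s)" using 1 2 4 5 unfolding A_def by (simp add: algebra_simps)
    then have 6: "b t \<le> 2 * A * b s" using t by simp
    have 7: "2 * A * b s * 1 \<le> 2 * A * b s * B" using B1 A1 bt by (intro mult_left_mono) auto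
    from 6 7 show "b t \<le> 2 * A * B * b s" by (simp add: mult_ac)
    have "bm s \<le> bm t" using mm t s ts by (auto simp: monotone_on_def)
    have 1: "b s / s \<le> C2 * bm s" using C2(2)[OF s] by blast
    have 2: "C2 * bm s \<le> C2 * bm t" using \<open>bm s \<le> bm t\<close> C2(1) by (intro mult_left_mono) auto
    have 3: "bm t \<le> C2 * (b t / t)" using C2(2)[OF t] C2(1) by (simp add: divide_le_eq mult.commute)
    have 4: "C2 * bm t \<le> C2 * (C2 * (b t / t))" using 3 C2(1) by (intro mult_left_mono) auto
    have "b s / s \<le> B * (b t / t)" using 1 2 4 unfolding B_def by (simp add: algebra_simps)
    then have "b s \<le> s * (B * (b t / t))" using s by (simp add: divide_le_eq mult.commute)
    also have "\<dots> \<le> 2 * t * (B * (b t / t))"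
      using st bt t B1 by (intro mult_right_mono) auto
    also have "\<dots> = 2 * B * b t" using t by simp
    finally have 6: "b s \<le> 2 * B * b t" .
    have 7: "2 * B * b t * 1 \<le> 2 * B * b t * A" using B1 A1 bt by (intro mult_left_mono) auto
    from 6 7 show "b s \<le> 2 * A * B * b t" by (simp add: mult_ac)
  qed
qed

lemma cc_equiv:
  assumes sv: "slowly_varying b"
  shows "\<exists>C\<ge>1. \<forall>t>0. b t / C \<le> cc b t \<and> cc b t \<le> C * b t"
proof -
  have bpos: "\<And>t. t > 0 \<Longrightarrow> b t > 0" using sv by (simp add: slowly_varying_def)
  obtain K where K1: "K \<ge> 1" and K: "\<And>t s. 0 < t \<Longrightarrow> t \<le> s \<Longrightarrow> s \<le> 2*t \<Longrightarrow> b s \<le> K * b t \<and> b t \<le> K * b s"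
    using sv_K[OF sv] by blast
  have e5: "exp (5::real) \<ge> 1" by simp
  show ?thesis
  proof (intro exI[of _ "2 * K * exp 5"] conjI allI impI)
    show "1 \<le> 2 * K * exp 5" using K1 e5 by (metis mult_mono' mult_1 zero_le_one order_trans le_add_same_cancel2 mult_2 less_eq_real_def)
    fix t :: real assume t: "t > 0"
    define m where "m = \<lfloor>log 2 t\<rfloor>"
    define p :: real where "p = 2 powr m"
    have p0: "p > 0" by (simp add: p_def)
    have "p \<le> 2 powr (log 2 t)" unfolding p_def m_def by (intro powr_mono) auto
    then have pt: "p \<le> t" using t by simp
    have "2 powr (log 2 t) < 2 powr (m + 1)" unfolding m_def by (intro powr_less_mono) linarith+
    moreover have "2 powr (real_of_int m + 1) = 2 * p" by (simp add: p_def powr_add)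
    ultimately have tp: "t < 2 * p" using t by simp
    define s where "s = t / p"
    have s1: "1 \<le> s" "s \<le> 2" using pt tp p0 by (auto simp: s_def field_simps)
    have cc_eq: "cc b t = b p * psi s + b (2 * p) * psi (s / 2)"
      unfolding cc_def m_def[symmetric] p_def[symmetric] s_def
      using \<open>2 powr (real_of_int m + 1) = 2 * p\<close> by (simp add: mult.commute)
    have bt: "b t > 0" "b p > 0" "b (2*p) > 0" using bpos t p0 by auto
    have k1: "b p \<le> K * b t" "b t \<le> K * b p" using K[OF p0 pt] tp by auto
    have k2: "b (2*p) \<le> K * b t" "b t \<le> K * b (2*p)" using K[OF t, of "2*p"] tp pt by auto
    have ps: "0 \<le> psi s" "psi s \<le> 1" "0 \<le> psi (s/2)" "psi (s/2) \<le> 1"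
      using psi_nonneg psi_le1 by auto
    have "cc b t \<le> K * b t * psi s + K * b t * psi (s/2)"
      unfolding cc_eq using k1 k2 ps by (intro add_mono mult_right_mono) auto
    also have "\<dots> \<le> K * b t * 1 + K * b t * 1"
      using ps K1 bt by (intro add_mono mult_left_mono) auto
    also have "\<dots> = 2 * K * b t" by simp
    also have "\<dots> \<le> 2 * K * exp 5 * b t"
      using K1 bt e5 by (simp add: mult_le_cancel_left1)
    finally show "cc b t \<le> 2 * K * exp 5 * b t" .
    have "b t / K * (psi s + psi (s/2)) = (b t / K) * psi s + (b t / K) * psi (s/2)"
      by (simp add: algebra_simps)
    also have "\<dots> \<le> cc b t"
      unfolding cc_eq using k1 k2 ps K1 by (intro add_mono mult_right_mono) (auto simp: divide_le_eq mult.commute)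
    finally have l: "b t / K * (psi s + psi (s/2)) \<le> cc b t" .
    have "b t / K * exp (-5) \<le> b t / K * (psi s + psi (s/2))"
      using psi_lower[OF s1] bt K1 by (intro mult_left_mono) auto
    moreover have "b t / K * exp (-5) = b t / (K * exp 5)"
      using K1 by (simp add: exp_minus field_simps)
    moreover have "b t / (2 * K * exp 5) \<le> b t / (K * exp 5)"
    proof (rule divide_left_mono)
      have "0 < K * exp 5" using K1 by simp
      then show "K * exp 5 \<le> 2 * K * exp 5" by simp
      show "0 \<le> b t" using bt by simp
      show "0 < 2 * K * exp 5 * (K * exp 5)" using K1 by simp
    qed
    ultimately show "b t / (2 * K * exp 5) \<le> cc b t" using l by linarith
  qed
qed

lemma equiv_scale:
  assumes "equiv_on A c b" "\<forall>t\<in>A. w t \<ge> 0" "equiv_on A (\<lambda>t. w t * b t) g"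
  shows "equiv_on A (\<lambda>t. w t * c t) g"
proof -
  obtain C where C: "C \<ge> 1" "\<forall>t\<in>A. b t / C \<le> c t \<and> c t \<le> C * b t"
    using assms(1) unfolding equiv_on_def by auto
  obtain D where D: "D \<ge> 1" "\<forall>t\<in>A. g t / D \<le> w t * b t \<and> w t * b t \<le> D * g t"
    using assms(3) unfolding equiv_on_def by auto
  show ?thesis unfolding equiv_on_def
  proof (intro exI[of _ "C * D"] conjI ballI)
    show "1 \<le> C * D" using C D by (metis mult_mono' mult_1 zero_le_one order_trans)
    fix t assume t: "t \<in> A"
    have w: "w t \<ge> 0" using assms(2) t by auto
    have "w t * c t \<le> w t * (C * b t)" using C t w by (intro mult_left_mono) auto
    also have "\<dots> = C * (w t * b t)" by simp
    also have "\<dots> \<le> C * (D * g t)" using D t C by (intro mult_left_mono) auto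
    finally show "w t * c t \<le> C * D * g t" by (simp add: mult.assoc)
    have "g t / (C * D) = (g t / D) / C" by simp
    also have "\<dots> \<le> (w t * b t) / C" using D t C by (intro divide_right_mono) auto
    also have "\<dots> = w t * (b t / C)" by simp
    also have "\<dots> \<le> w t * c t" using C t w by (intro mult_left_mono) auto
    finally show "g t / (C * D) \<le> w t * c t" .
  qed
qed

theorem theorem1p2:
  fixes b :: "real \<Rightarrow> real"
  assumes "slowly_varying b"
  shows "\<exists>c :: real \<Rightarrow> real. (\<forall>t>0. c t > 0) \<and> equiv_on {0<..} c b \<and>
           slowly_varying c \<and> smooth_on {0<..} c"
proof (intro exI[of _ "cc b"] conjI)
  have bpos: "\<And>t. t > 0 \<Longrightarrow> b t > 0" using assms by (simp add: slowly_varying_def)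
  obtain C where C: "C \<ge> 1" "\<forall>t>0. b t / C \<le> cc b t \<and> cc b t \<le> C * b t"
    using cc_equiv[OF assms] by blast
  show pos: "\<forall>t>0. cc b t > 0"
  proof (intro allI impI)
    fix t :: real assume t: "t > 0"
    have "0 < b t / C" using bpos[OF t] C(1) by simp
    then show "cc b t > 0" using C(2) t by (meson less_le_trans)
  qed
  show eq: "equiv_on {0<..} (cc b) b"
    unfolding equiv_on_def using C by auto
  show sm: "smooth_on {0<..} (cc b)" by (rule cc_smooth)
  have cont: "continuous_on {0<..} (cc b)"
    using sm unfolding smooth_on_def by (metis funpow_0)
  show "slowly_varying (cc b)"
    unfolding slowly_varying_def
  proof (intro conjI allI impI)
    show "cc b \<in> borel_measurable (lebesgue_on {0<..})"
      by (rule continuous_imp_measurable_on_sets_lebesgue[OF cont]) simp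
    show "\<And>t. 0 < t \<Longrightarrow> 0 < cc b t" using pos by blast
    fix \<epsilon> :: real assume e: "\<epsilon> > 0"
    have H: "\<forall>\<epsilon>>0. \<exists>bp bm :: real \<Rightarrow> real. mono_on {0<..} bp \<and> antimono_on {0<..} bm \<and>
        equiv_on {0<..} (\<lambda>t. t powr \<epsilon> * b t) bp \<and>
        equiv_on {0<..} (\<lambda>t. t powr (-\<epsilon>) * b t) bm"
      using assms unfolding slowly_varying_def by blast
    obtain bp bm :: "real \<Rightarrow> real" where bb: "mono_on {0<..} bp" "antimono_on {0<..} bm"
        "equiv_on {0<..} (\<lambda>t. t powr \<epsilon> * b t) bp"
        "equiv_on {0<..} (\<lambda>t. t powr (-\<epsilon>) * b t) bm"
      using H[rule_format, OF e] by blast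
    show "\<exists>bp bm :: real \<Rightarrow> real. mono_on {0<..} bp \<and> antimono_on {0<..} bm \<and>
        equiv_on {0<..} (\<lambda>t. t powr \<epsilon> * cc b t) bp \<and>
        equiv_on {0<..} (\<lambda>t. t powr (-\<epsilon>) * cc b t) bm"
      using bb equiv_scale[OF eq _ bb(3)] equiv_scale[OF eq _ bb(4)] by auto
  qed
qed

end
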